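(* Let $\Gamma:[0,1]\to\mathcal{D}$ be a continuous path. For any $s\in[0,1]$ and any finitely generated subgroup $H\le\Gamma_s$, the restriction $J_{s,t}|_H$ is an injective homomorphism into $\mathrm{PSL}_2\mathbb{C}$ for all $t\in[0,1]$ sufficiently close to $s$.
   Context: $\mathcal{D}$: discrete torsion-free subgroups of $\mathrm{PSL}_2\mathbb{C}$ with the Chabauty topology ($\Gamma_n\to\Gamma$ iff accumulation points of sequences $\psi_n\in\Gamma_n$ lie in $\Gamma$ and each element of $\Gamma$ is a limit of some $\psi_n\in\Gamma_n$). For a path $\Gamma$ with $\Gamma_t=\Gamma(t)$, $s\in[0,1]$, $\psi\in\Gamma_s$: a $\Gamma$-path through $\psi$ based at $s$ is a continuous $j:I\to\mathrm{PSL}_2\mathbb{C}$, $I\subseteq[0,1]$ an interval containing $s$, with $j(t)\in\Gamma_t$ for $t\in I$ and $j(s)=\psi$. Any two such paths agree on the intersection of their domains, so there is a maximal such interval $I^s_\psi$, carrying the path $j^s_\psi$. With $\overline{\mathrm{PSL}_2\mathbb{C}}=\mathrm{PSL}_2\mathbb{C}\cup\{\infty\}$, define $J_{s,t}:\Gamma_s\to\overline{\mathrm{PSL}_2\mathbb{C}}$ by $J_{s,t}(\psi)=j^s_\psi(t)$ if $t\in I^s_\psi$ and $\infty$ otherwise. *)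

theory Defs
  imports "HOL-Analysis.Analysis"
begin

definition SL2 :: "(complex^2^2) set" where
  "SL2 = {A. det A = 1}"

typedef psl2 = "{{A, -A} | A :: complex^2^2. det A = 1}"
  by (rule exI[of _ "{mat 1, - mat 1}"], auto)

definition psl_proj :: "complex^2^2 \<Rightarrow> psl2" where
  "psl_proj A = Abs_psl2 {A, -A}"

instantiation psl2 :: topological_space
begin
definition open_psl2 :: "psl2 set \<Rightarrow> bool" where
  "open_psl2 U = openin (top_of_set SL2) {A \<in> SL2. psl_proj A \<in> U}"
instance
proof
  show "open (UNIV :: psl2 set)"
    unfolding open_psl2_def by simp
next
  fix S T :: "psl2 set"
  assume "open S" "open T"
  then have "openin (top_of_set SL2) ({A \<in> SL2. psl_proj A \<in> S} \<inter> {A \<in> SL2. psl_proj A \<in> T})"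
    unfolding open_psl2_def by (rule openin_Int)
  moreover have "{A \<in> SL2. psl_proj A \<in> S \<inter> T} = {A \<in> SL2. psl_proj A \<in> S} \<inter> {A \<in> SL2. psl_proj A \<in> T}"
    by auto
  ultimately show "open (S \<inter> T)" unfolding open_psl2_def by simp
next
  fix K :: "psl2 set set"
  assume "\<forall>S\<in>K. open S"
  then have "openin (top_of_set SL2) (\<Union>S\<in>K. {A \<in> SL2. psl_proj A \<in> S})"
    unfolding open_psl2_def by (intro openin_Union) auto
  moreover have "{A \<in> SL2. psl_proj A \<in> \<Union>K} = (\<Union>S\<in>K. {A \<in> SL2. psl_proj A \<in> S})"
    by auto
  ultimately show "open (\<Union>K)" unfolding open_psl2_def by simp
qed
end

instantiation psl2 :: power
begin
definition times_psl2 :: "psl2 \<Rightarrow> psl2 \<Rightarrow> psl2" where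
  "times_psl2 x y = Abs_psl2 {A ** B | A B. A \<in> Rep_psl2 x \<and> B \<in> Rep_psl2 y}"
definition one_psl2 :: psl2 where
  "one_psl2 = Abs_psl2 {mat 1, - mat 1}"
instance ..
end

definition psl_inv :: "psl2 \<Rightarrow> psl2" where
  "psl_inv x = Abs_psl2 {matrix_inv A | A. A \<in> Rep_psl2 x}"

definition psl_subgroup :: "psl2 set \<Rightarrow> bool" where
  "psl_subgroup G \<longleftrightarrow> 1 \<in> G \<and> (\<forall>a\<in>G. \<forall>b\<in>G. a * b \<in> G) \<and> (\<forall>a\<in>G. psl_inv a \<in> G)"

definition psl_generated :: "psl2 set \<Rightarrow> psl2 set" where
  "psl_generated F = \<Inter>{K. psl_subgroup K \<and> F \<subseteq> K}"

definition psl_fin_gen :: "psl2 set \<Rightarrow> bool" where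
  "psl_fin_gen H \<longleftrightarrow> (\<exists>F. finite F \<and> F \<subseteq> H \<and> H = psl_generated F)"

definition psl_discrete :: "psl2 set \<Rightarrow> bool" where
  "psl_discrete G \<longleftrightarrow> (\<forall>g\<in>G. \<exists>U. open U \<and> U \<inter> G = {g})"

definition torsion_free :: "psl2 set \<Rightarrow> bool" where
  "torsion_free G \<longleftrightarrow> (\<forall>g\<in>G. \<forall>n::nat. n > 0 \<and> g ^ n = 1 \<longrightarrow> g = 1)"

definition Dspace :: "psl2 set set" where
  "Dspace = {G. psl_subgroup G \<and> psl_discrete G \<and> torsion_free G}"

definition chabauty_conv :: "(nat \<Rightarrow> psl2 set) \<Rightarrow> psl2 set \<Rightarrow> bool" where
  "chabauty_conv G G0 \<longleftrightarrow>
     (\<forall>\<psi> r g. (\<forall>n. \<psi> n \<in> G n) \<and> strict_mono r \<and> (\<psi> \<circ> r) \<longlonglongrightarrow> g \<longrightarrow> g \<in> G0) \<and>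
     (\<forall>g\<in>G0. \<exists>\<psi>. (\<forall>n. \<psi> n \<in> G n) \<and> \<psi> \<longlonglongrightarrow> g)"

definition chabauty_path :: "(real \<Rightarrow> psl2 set) \<Rightarrow> bool" where
  "chabauty_path \<Gamma> \<longleftrightarrow> (\<forall>t\<in>{0..1}. \<Gamma> t \<in> Dspace) \<and>
     (\<forall>t\<in>{0..1}. \<forall>\<tau>. (\<forall>n. \<tau> n \<in> {0..1}) \<and> \<tau> \<longlonglongrightarrow> t \<longrightarrow> chabauty_conv (\<lambda>n. \<Gamma> (\<tau> n)) (\<Gamma> t))"

definition gpath :: "(real \<Rightarrow> psl2 set) \<Rightarrow> real \<Rightarrow> psl2 \<Rightarrow> real set \<Rightarrow> (real \<Rightarrow> psl2) \<Rightarrow> bool" where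
  "gpath \<Gamma> s \<psi> I j \<longleftrightarrow> I \<subseteq> {0..1} \<and> is_interval I \<and> s \<in> I \<and> continuous_on I j \<and>
     (\<forall>t\<in>I. j t \<in> \<Gamma> t) \<and> j s = \<psi>"

text \<open>None plays the role of the point at infinity.\<close>
definition Jmap :: "(real \<Rightarrow> psl2 set) \<Rightarrow> real \<Rightarrow> real \<Rightarrow> psl2 \<Rightarrow> psl2 option" where
  "Jmap \<Gamma> s t \<psi> =
     (if \<exists>I j. gpath \<Gamma> s \<psi> I j \<and> t \<in> I
      then Some (THE g. \<exists>I j. gpath \<Gamma> s \<psi> I j \<and> t \<in> I \<and> j t = g)
      else None)"

end

theory Submission
  imports Defs
begin

type_synonym m2 = "complex^2^2"

definition mn :: "m2 \<Rightarrow> real" where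
  "mn A = norm (A$1$1) + norm (A$1$2) + norm (A$2$1) + norm (A$2$2)"

lemma forall2: "(\<forall>i::2. P i) \<longleftrightarrow> P 1 \<and> P 2" by (metis exhaust_2)

lemma m2_eq_iff: "(A::m2) = B \<longleftrightarrow> A$1$1 = B$1$1 \<and> A$1$2 = B$1$2 \<and> A$2$1 = B$2$1 \<and> A$2$2 = B$2$2"
  by (auto simp: vec_eq_iff forall2)

lemma mult_entries:
  fixes A B :: m2
  shows "(A ** B)$i$j = A$i$1 * B$1$j + A$i$2 * B$2$j"
  by (simp add: matrix_matrix_mult_def sum_2)

lemma mat1_entries: "(mat 1 :: m2)$1$1 = 1" "(mat 1 :: m2)$2$2 = 1" "(mat 1 :: m2)$1$2 = 0" "(mat 1 :: m2)$2$1 = 0"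
  by (simp_all add: mat_def)

lemma mn_nonneg: "0 \<le> mn A" by (simp add: mn_def)

lemma mn_neg: "mn (- A) = mn A" by (simp add: mn_def)

lemma mn_add: "mn (A + B) \<le> mn A + mn B"
  unfolding mn_def using norm_triangle_ineq[of "A$1$1" "B$1$1"] norm_triangle_ineq[of "A$1$2" "B$1$2"]
    norm_triangle_ineq[of "A$2$1" "B$2$1"] norm_triangle_ineq[of "A$2$2" "B$2$2"] by simp

lemma mn_diff_commute: "mn (A - B) = mn (B - A)"
  by (metis minus_diff_eq mn_neg)

lemma mn_zero_iff: "mn A = 0 \<longleftrightarrow> A = 0"
proof
  assume "mn A = 0"
  then have "norm (A$1$1) = 0 \<and> norm (A$1$2) = 0 \<and> norm (A$2$1) = 0 \<and> norm (A$2$2) = 0"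
    unfolding mn_def by (smt (verit) norm_ge_zero)
  then show "A = 0" by (simp add: m2_eq_iff)
qed (simp add: mn_def)

lemma aux_prod_ineq:
  fixes a b c d x y z w :: real
  assumes "0\<le>a" "0\<le>b" "0\<le>c" "0\<le>d" "0\<le>x" "0\<le>y" "0\<le>z" "0\<le>w"
  shows "(a*x + b*z) + (a*y + b*w) + (c*x + d*z) + (c*y + d*w) \<le> (a+b+c+d)*(x+y+z+w)"
proof -
  have "(a+b+c+d)*(x+y+z+w) = (a*x + b*z) + (a*y + b*w) + (c*x + d*z) + (c*y + d*w)
     + (a*z + a*w + b*x + b*y + c*z + c*w + d*x + d*y)"
    by (simp add: algebra_simps)
  moreover have "0 \<le> a*z + a*w + b*x + b*y + c*z + c*w + d*x + d*y"
    using assms by simp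
  ultimately show ?thesis by linarith
qed

lemma norm_entry_bound: "norm ((a::complex)*x + b*z) \<le> norm a * norm x + norm b * norm z"
  by (metis norm_mult norm_triangle_ineq)

lemma mn_mult: "mn (A ** B) \<le> mn A * mn B"
proof -
  have "mn (A ** B) \<le> (norm (A$1$1) * norm (B$1$1) + norm (A$1$2) * norm (B$2$1))
     + (norm (A$1$1) * norm (B$1$2) + norm (A$1$2) * norm (B$2$2))
     + (norm (A$2$1) * norm (B$1$1) + norm (A$2$2) * norm (B$2$1))
     + (norm (A$2$1) * norm (B$1$2) + norm (A$2$2) * norm (B$2$2))"
    unfolding mn_def mult_entries by (intro add_mono norm_entry_bound)
  also have "\<dots> \<le> mn A * mn B" unfolding mn_def by (rule aux_prod_ineq) auto
  finally show ?thesis .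
qed

lemma norm_le_sum_cart: "norm (x::'a::real_normed_vector^'n) \<le> sum (\<lambda>i. norm (x$i)) UNIV"
  unfolding norm_vec_def by (rule L2_set_le_sum) simp

lemma norm_le_mn: "norm A \<le> mn A"
proof -
  have "norm A \<le> norm (A$1) + norm (A$2)" using norm_le_sum_cart[of A] by (simp add: sum_2)
  also have "\<dots> \<le> mn A"
    using norm_le_sum_cart[of "A$1"] norm_le_sum_cart[of "A$2"] by (simp add: sum_2 mn_def)
  finally show ?thesis .
qed

lemma entry_le_norm: "norm ((A::m2)$i$j) \<le> norm A"
  using Finite_Cartesian_Product.norm_nth_le[of "A$i" j] Finite_Cartesian_Product.norm_nth_le[of A i] by (meson order_trans)

lemma mn_le_norm: "mn A \<le> 4 * norm A"
  unfolding mn_def using entry_le_norm[of A] by (smt (verit))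

lemma mn_mat1: "mn (mat 1) = 2" by (simp add: mn_def mat_def)

definition adj2 :: "m2 \<Rightarrow> m2" where
  "adj2 A = (\<chi> i j. if i = 1 then (if j = 1 then A$2$2 else - A$1$2)
                    else (if j = 1 then - A$2$1 else A$1$1))"

lemma adj2_entries: "adj2 A $1$1 = A$2$2" "adj2 A $1$2 = - A$1$2" "adj2 A $2$1 = - A$2$1" "adj2 A $2$2 = A$1$1"
  by (simp_all add: adj2_def)

lemma adj2_inv:
  assumes "det A = 1"
  shows "A ** adj2 A = mat 1" "adj2 A ** A = mat 1"
  using assms by (simp_all add: m2_eq_iff mult_entries adj2_entries mat1_entries det_2 algebra_simps)

lemma matrix_inv_adj2:
  assumes "det A = 1" shows "matrix_inv A = adj2 A"
proof -
  have ex: "A ** adj2 A = mat 1 \<and> adj2 A ** A = mat 1" using adj2_inv[OF assms] by simp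
  show ?thesis unfolding matrix_inv_def
  proof (rule someI2[of _ "adj2 A"])
    show "A ** adj2 A = mat 1 \<and> adj2 A ** A = mat 1" by (fact ex)
  next
    fix B assume B: "A ** B = mat 1 \<and> B ** A = mat 1"
    have "B = B ** (A ** adj2 A)" using ex by (simp add: matrix_mul_rid)
    also have "\<dots> = (B ** A) ** adj2 A" by (simp add: matrix_mul_assoc)
    also have "\<dots> = adj2 A" using B by (simp add: matrix_mul_lid)
    finally show "B = adj2 A" .
  qed
qed

lemma mn_adj2: "mn (adj2 A) = mn A" by (simp add: mn_def adj2_entries)
lemma adj2_diff: "adj2 A - adj2 B = adj2 (A - B)" by (simp add: m2_eq_iff adj2_entries)
lemma adj2_neg: "adj2 (- A) = - adj2 A" by (simp add: m2_eq_iff adj2_entries)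
lemma det_adj2: "det (adj2 A) = det A" by (simp add: det_2 adj2_entries algebra_simps)
lemma det_neg2: "det (- (A::m2)) = det A" by (simp add: det_2)
lemma det_mul2: "det ((A::m2) ** B) = det A * det B" by (rule det_mul)


lemma det_mat1: "det (mat 1 :: m2) = 1" by (simp add: det_2 mat_def)

lemma neg_mult_left: "(- (A::m2)) ** (B::m2) = - (A ** B)" by (simp add: m2_eq_iff mult_entries)
lemma neg_mult_right: "(A::m2) ** (- B::m2) = - (A ** B)" by (simp add: m2_eq_iff mult_entries)

lemma c_neg: "(a::complex) = - a \<Longrightarrow> a = 0"
proof -
  assume "a = - a"
  then have "a + a = 0" using eq_neg_iff_add_eq_0 by blast
  then show "a = 0" by (simp add: mult_2[symmetric])
qed

lemma det1_ne_neg: "det (A::m2) = 1 \<Longrightarrow> A \<noteq> - A"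
proof
  assume "det A = 1" "A = - A"
  then have "A$i$j = - A$i$j" for i j by (metis vector_uminus_component)
  then have "A$i$j = 0" for i j using c_neg by blast
  then have "det A = 0" by (simp add: det_2)
  with \<open>det A = 1\<close> show False by simp
qed

definition rep :: "psl2 \<Rightarrow> m2" where
  "rep g = (SOME A. det A = 1 \<and> Rep_psl2 g = {A, -A})"

lemma rep_props: "det (rep g) = 1 \<and> Rep_psl2 g = {rep g, - rep g}"
proof -
  have "\<exists>A. det A = 1 \<and> Rep_psl2 g = {A, -A}" using Rep_psl2[of g] by auto
  then show ?thesis unfolding rep_def by (rule someI_ex)
qed

lemma det_rep[simp]: "det (rep g) = 1" using rep_props by blast

lemma proj_rep[simp]: "psl_proj (rep g) = g"
  unfolding psl_proj_def using rep_props[of g] by (metis Rep_psl2_inverse)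

lemma Rep_proj: "det A = 1 \<Longrightarrow> Rep_psl2 (psl_proj A) = {A, -A}"
  unfolding psl_proj_def by (rule Abs_psl2_inverse) auto

lemma proj_eq_iff:
  assumes "det A = 1" "det B = 1"
  shows "psl_proj A = psl_proj B \<longleftrightarrow> B = A \<or> B = - A"
proof
  assume "psl_proj A = psl_proj B"
  then have "{A, -A} = {B, -B}" using Rep_proj assms by metis
  then show "B = A \<or> B = - A" by (metis doubleton_eq_iff minus_minus)
next
  assume "B = A \<or> B = - A"
  then have "{A, -A} = {B, -B}" by auto
  then show "psl_proj A = psl_proj B" unfolding psl_proj_def by (rule arg_cong)
qed

lemma rep_proj: "det A = 1 \<Longrightarrow> rep (psl_proj A) = A \<or> rep (psl_proj A) = - A"
  using proj_eq_iff[of A "rep (psl_proj A)"] by simp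

lemma proj_neg: "psl_proj (- A) = psl_proj A"
proof -
  have "{- A, - (- A)} = {A, - A}" by auto
  then show ?thesis unfolding psl_proj_def by (rule arg_cong)
qed

lemma psl2_cases: obtains A where "det A = 1" "g = psl_proj A"
  using det_rep proj_rep by metis

lemma proj_mult:
  assumes "det A = 1" "det B = 1"
  shows "psl_proj A * psl_proj B = psl_proj (A ** B)"
proof -
  have "{C ** D |C D. C \<in> Rep_psl2 (psl_proj A) \<and> D \<in> Rep_psl2 (psl_proj B)} = {A ** B, - (A ** B)}"
  proof (intro equalityI subsetI)
    fix X assume "X \<in> {C ** D |C D. C \<in> Rep_psl2 (psl_proj A) \<and> D \<in> Rep_psl2 (psl_proj B)}"
    then obtain C D where X: "X = C ** D" "C = A \<or> C = - A" "D = B \<or> D = - B"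
      using assms by (auto simp: Rep_proj)
    then show "X \<in> {A ** B, - (A ** B)}"
      by (elim disjE) (simp_all add: neg_mult_left neg_mult_right)
  next
    fix X assume "X \<in> {A ** B, - (A ** B)}"
    then have "X = A ** B \<or> X = (- A) ** B" by (auto simp: neg_mult_left)
    then show "X \<in> {C ** D |C D. C \<in> Rep_psl2 (psl_proj A) \<and> D \<in> Rep_psl2 (psl_proj B)}"
      using assms by (auto simp: Rep_proj)
  qed
  then show ?thesis unfolding times_psl2_def psl_proj_def[of "A ** B"] by (rule arg_cong)
qed

lemma proj_one: "1 = psl_proj (mat 1)"
  unfolding one_psl2_def psl_proj_def ..

lemma proj_inv:
  assumes "det A = 1"
  shows "psl_inv (psl_proj A) = psl_proj (adj2 A)"
proof -
  have d: "det (- A) = 1" using assms det_neg2 by simp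
  have i1: "matrix_inv A = adj2 A" using assms by (rule matrix_inv_adj2)
  have i2: "matrix_inv (- A) = - adj2 A" using matrix_inv_adj2[OF d] adj2_neg by simp
  have "{matrix_inv C |C. C \<in> Rep_psl2 (psl_proj A)} = {matrix_inv C |C. C \<in> {A, - A}}"
    using assms by (simp add: Rep_proj)
  also have "\<dots> = {matrix_inv A, matrix_inv (- A)}" by blast
  also have "\<dots> = {adj2 A, - adj2 A}" using i1 i2 by simp
  finally show ?thesis unfolding psl_inv_def psl_proj_def[of "adj2 A"] by (rule arg_cong)
qed

lemma det_mult1: "det A = 1 \<Longrightarrow> det B = 1 \<Longrightarrow> det ((A::m2) ** B) = 1"
  by (simp add: det_mul)

lemma proj_eq_one_iff: "det A = 1 \<Longrightarrow> psl_proj A = 1 \<longleftrightarrow> A = mat 1 \<or> A = - mat 1"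
  unfolding proj_one eq_commute[of "psl_proj A"] using proj_eq_iff[OF det_mat1] by simp

section \<open>pseudo-distance\<close>

definition md :: "m2 \<Rightarrow> m2 \<Rightarrow> real" where
  "md A B = min (mn (A - B)) (mn (A + B))"

definition pdist :: "psl2 \<Rightarrow> psl2 \<Rightarrow> real" where
  "pdist g h = md (rep g) (rep h)"

lemma md_neg1: "md (- A) B = md A B"
proof -
  have e: "- A - B = - (A + B)" "- A + B = - (A - B)" by simp_all
  show ?thesis unfolding md_def e mn_neg by (rule min.commute)
qed
lemma md_neg2: "md A (- B) = md A B"
proof -
  have e: "A - - B = A + B" "A + - B = A - B" by simp_all
  show ?thesis unfolding md_def e by (rule min.commute)
qed

lemma pdist_proj:
  assumes "det A = 1" "det B = 1"
  shows "pdist (psl_proj A) (psl_proj B) = md A B"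
  unfolding pdist_def using rep_proj[OF assms(1)] rep_proj[OF assms(2)]
  by (elim disjE) (simp_all add: md_neg1 md_neg2)

lemma md_le: "md A B \<le> mn (A - B)" unfolding md_def by simp

lemma md_nonneg: "0 \<le> md A B" unfolding md_def by (simp add: mn_nonneg)
lemma pdist_nonneg: "0 \<le> pdist g h" unfolding pdist_def by (rule md_nonneg)

lemma md_sym: "md A B = md B A"
  unfolding md_def by (simp only: mn_diff_commute[of A B] add.commute[of A B])
lemma pdist_sym: "pdist g h = pdist h g" unfolding pdist_def by (rule md_sym)

lemma pdist_self[simp]: "pdist g g = 0"
  unfolding pdist_def md_def by (simp add: mn_def)

lemma md_tri: "md A C \<le> md A B + md B C"
proof -
  have e: "A - C = (A - B) + (B - C)" "A + C = (A - B) + (B + C)"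
       "A - C = (A + B) + - (B + C)" "A + C = (A + B) + - (B - C)" by (simp_all add: algebra_simps)
  have "mn (A - C) \<le> mn (A - B) + mn (B - C)" using mn_add[of "A - B" "B - C"] unfolding e(1)[symmetric] .
  moreover have "mn (A + C) \<le> mn (A - B) + mn (B + C)" using mn_add[of "A - B" "B + C"] unfolding e(2)[symmetric] .
  moreover have "mn (A - C) \<le> mn (A + B) + mn (B + C)"
    using mn_add[of "A + B" "- (B + C)"] unfolding e(3)[symmetric] mn_neg .
  moreover have "mn (A + C) \<le> mn (A + B) + mn (B - C)"
    using mn_add[of "A + B" "- (B - C)"] unfolding e(4)[symmetric] mn_neg .
  ultimately show ?thesis unfolding md_def by linarith
qed

lemma pdist_tri: "pdist g k \<le> pdist g h + pdist h k"
  unfolding pdist_def by (rule md_tri)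

lemma pdist_eq0: "pdist g h = 0 \<Longrightarrow> g = h"
proof -
  assume "pdist g h = 0"
  then have "mn (rep g - rep h) = 0 \<or> mn (rep g + rep h) = 0"
    unfolding pdist_def md_def by linarith
  then have "rep g - rep h = 0 \<or> rep g + rep h = 0" using mn_zero_iff by blast
  then have "rep h = rep g \<or> rep h = - rep g"
    using add.inverse_unique by force
  then show "g = h" using proj_neg[of "rep g"] proj_rep by metis
qed

lemma pdist_pos: "g \<noteq> h \<Longrightarrow> 0 < pdist g h"
  using pdist_eq0 pdist_nonneg by (metis order_le_less)

lemma pdist_proj_le: "det A = 1 \<Longrightarrow> det B = 1 \<Longrightarrow> pdist (psl_proj A) (psl_proj B) \<le> mn (A - B)"
  using pdist_proj md_le by simp

section \<open>Topology via pdist\<close>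

lemma open_psl2_iff: "open U \<longleftrightarrow> (\<forall>g\<in>U. \<exists>e>0. \<forall>h. pdist h g < e \<longrightarrow> h \<in> U)"
proof
  assume "open U"
  then have op: "openin (top_of_set SL2) {A \<in> SL2. psl_proj A \<in> U}" unfolding open_psl2_def .
  show "\<forall>g\<in>U. \<exists>e>0. \<forall>h. pdist h g < e \<longrightarrow> h \<in> U"
  proof
    fix g assume "g \<in> U"
    then have "rep g \<in> {A \<in> SL2. psl_proj A \<in> U}" by (simp add: SL2_def)
    then obtain e where e: "e > 0" "\<forall>x'\<in>SL2. dist x' (rep g) < e \<longrightarrow> x' \<in> {A \<in> SL2. psl_proj A \<in> U}"
      using op unfolding openin_euclidean_subtopology_iff by blast
    show "\<exists>e>0. \<forall>h. pdist h g < e \<longrightarrow> h \<in> U"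
    proof (intro exI conjI allI impI)
      show "e > 0" by fact
      fix h assume "pdist h g < e"
      then have "mn (rep h - rep g) < e \<or> mn (rep h + rep g) < e" unfolding pdist_def md_def by linarith
      moreover have "- rep h - rep g = - (rep h + rep g)" by simp
      ultimately have "mn (rep h - rep g) < e \<or> mn (- rep h - rep g) < e" by (simp only: mn_neg)
      then have "norm (rep h - rep g) < e \<or> norm (- rep h - rep g) < e"
        using norm_le_mn le_less_trans by blast
      then have "dist (rep h) (rep g) < e \<or> dist (- rep h) (rep g) < e" by (simp only: dist_norm)
      moreover have "rep h \<in> SL2" "- rep h \<in> SL2" using det_neg2[of "rep h"] by (simp_all add: SL2_def)
      ultimately have "psl_proj (rep h) \<in> U \<or> psl_proj (- rep h) \<in> U" using e(2) by blast
      then show "h \<in> U" by (simp add: proj_neg)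
    qed
  qed
next
  assume H: "\<forall>g\<in>U. \<exists>e>0. \<forall>h. pdist h g < e \<longrightarrow> h \<in> U"
  show "open U" unfolding open_psl2_def openin_euclidean_subtopology_iff
  proof (intro conjI ballI)
    fix A assume A: "A \<in> {A \<in> SL2. psl_proj A \<in> U}"
    then obtain e where e: "e > 0" "\<forall>h. pdist h (psl_proj A) < e \<longrightarrow> h \<in> U" using H by blast
    show "\<exists>e>0. \<forall>x'\<in>SL2. dist x' A < e \<longrightarrow> x' \<in> {A \<in> SL2. psl_proj A \<in> U}"
    proof (intro exI conjI ballI impI)
      show "e/4 > 0" using e by simp
      fix B assume B: "B \<in> SL2" "dist B A < e/4"
      have "pdist (psl_proj B) (psl_proj A) \<le> mn (B - A)"
        using A B by (intro pdist_proj_le) (auto simp: SL2_def)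
      also have "\<dots> \<le> 4 * norm (B - A)" by (rule mn_le_norm)
      also have "\<dots> < e" using B by (simp add: dist_norm)
      finally show "B \<in> {A \<in> SL2. psl_proj A \<in> U}" using e B by auto
    qed
  qed auto
qed

lemma open_pball: "open {h. pdist h g < e}"
  unfolding open_psl2_iff
proof (intro ballI)
  fix h assume "h \<in> {h. pdist h g < e}"
  then show "\<exists>e'>0. \<forall>k. pdist k h < e' \<longrightarrow> k \<in> {h. pdist h g < e}"
  proof (intro exI[of _ "e - pdist h g"] conjI allI impI)
    show "e - pdist h g > 0" using \<open>h \<in> {h. pdist h g < e}\<close> by simp
    fix k assume "pdist k h < e - pdist h g"
    then show "k \<in> {h. pdist h g < e}" using pdist_tri[of k g h] by simp
  qed
qed

lemma tendsto_pdist_iff: "(f \<longlongrightarrow> g) F \<longleftrightarrow> (\<forall>e>0. eventually (\<lambda>x. pdist (f x) g < e) F)"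
proof
  assume "(f \<longlongrightarrow> g) F"
  then show "\<forall>e>0. eventually (\<lambda>x. pdist (f x) g < e) F"
  proof (intro allI impI)
    fix e :: real assume "e > 0" "(f \<longlongrightarrow> g) F"
    have "eventually (\<lambda>x. f x \<in> {h. pdist h g < e}) F"
      using topological_tendstoD[OF \<open>(f \<longlongrightarrow> g) F\<close> open_pball[of g e]] \<open>e > 0\<close> by simp
    then show "eventually (\<lambda>x. pdist (f x) g < e) F" by simp
  qed
next
  assume H: "\<forall>e>0. eventually (\<lambda>x. pdist (f x) g < e) F"
  show "(f \<longlongrightarrow> g) F"
  proof (rule topological_tendstoI)
    fix S assume "open S" "g \<in> S"
    then obtain e where e: "e > 0" "\<forall>h. pdist h g < e \<longrightarrow> h \<in> S" unfolding open_psl2_iff by blast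
    have "eventually (\<lambda>x. pdist (f x) g < e) F" using H e(1) by blast
    then show "eventually (\<lambda>x. f x \<in> S) F" by (rule eventually_mono) (use e(2) in blast)
  qed
qed

lemma continuous_on_pdist_iff:
  "continuous_on I j \<longleftrightarrow> (\<forall>x\<in>I. \<forall>e>0. \<exists>d>0. \<forall>y\<in>I. dist y x < d \<longrightarrow> pdist (j y) (j x) < e)"
  (is "?L \<longleftrightarrow> ?R")
proof -
  have "?L \<longleftrightarrow> (\<forall>x\<in>I. \<forall>e>0. eventually (\<lambda>y. pdist (j y) (j x) < e) (at x within I))"
    unfolding continuous_on_def tendsto_pdist_iff ..
  also have "\<dots> \<longleftrightarrow> ?R"
    unfolding eventually_at
  proof (intro ball_cong[OF refl] all_cong1 imp_cong[OF refl] iffI)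
    fix x e
    assume "\<exists>d>0. \<forall>y\<in>I. y \<noteq> x \<and> dist y x < d \<longrightarrow> pdist (j y) (j x) < e" "0 < e"
    then show "\<exists>d>0. \<forall>y\<in>I. dist y x < d \<longrightarrow> pdist (j y) (j x) < e" by (metis pdist_self)
  qed auto
  finally show ?thesis .
qed

lemma tendsto_seq_pdist: "(f \<longlonglongrightarrow> g) \<longleftrightarrow> (\<forall>e>0. \<exists>N. \<forall>n\<ge>N. pdist (f n) g < e)"
  unfolding tendsto_pdist_iff eventually_sequentially ..


abbreviation I2 :: m2 where "I2 \<equiv> mat 1"

lemma near_rep:
  assumes "det B = 1" "psl_proj B = b"
  shows "\<exists>A. det A = 1 \<and> psl_proj A = a \<and> mn (A - B) = pdist a b"
proof -
  have pd: "pdist a b = md (rep a) B"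
    using pdist_proj[of "rep a" B] assms by simp
  show ?thesis
  proof (cases "mn (rep a - B) \<le> mn (rep a + B)")
    case True
    then have "mn (rep a - B) = pdist a b" unfolding pd md_def by simp
    then show ?thesis by (intro exI[of _ "rep a"]) simp
  next
    case False
    have e: "- rep a - B = - (rep a + B)" by simp
    have "mn (- rep a - B) = pdist a b" using False unfolding pd md_def e mn_neg by simp
    moreover have "det (- rep a) = 1" using det_neg2[of "rep a"] by simp
    ultimately show ?thesis by (intro exI[of _ "- rep a"]) (simp add: proj_neg)
  qed
qed

lemma near_rep1: "\<exists>A. det A = 1 \<and> psl_proj A = a \<and> mn (A - I2) = pdist a 1"
  using near_rep[of I2 1 a] det_mat1 proj_one by simp

lemma mn_rev_tri: "mn X - mn Z \<le> mn (X + Z)"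
proof -
  have "mn X = mn ((X + Z) + (- Z))" by simp
  also have "\<dots> \<le> mn (X + Z) + mn Z" using mn_add[of "X + Z" "- Z"] unfolding mn_neg .
  finally show ?thesis by simp
qed

lemma norm_double: "norm ((x::complex) + x) = 2 * norm x"
proof -
  have "x + x = 2 * x" by (rule mult_2[symmetric])
  then show ?thesis by (simp add: norm_mult)
qed

lemma mn_double: "mn (Y + Y) = 2 * mn Y"
  unfolding mn_def by (simp add: norm_double algebra_simps)

lemma id_prod: "A ** B - I2 = (A - I2) ** (B - I2) + (A - I2) + (B - I2)"
  by (simp add: m2_eq_iff mult_entries mat1_entries algebra_simps)

lemma prod_near_one: "pdist (a * b) 1 \<le> pdist a 1 + pdist b 1 + pdist a 1 * pdist b 1"
proof -
  obtain A where A: "det A = 1" "psl_proj A = a" "mn (A - I2) = pdist a 1" using near_rep1 by blast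
  obtain B where B: "det B = 1" "psl_proj B = b" "mn (B - I2) = pdist b 1" using near_rep1 by blast
  have "a * b = psl_proj (A ** B)" using proj_mult[OF A(1) B(1)] A(2) B(2) by simp
  then have "pdist (a * b) 1 = pdist (psl_proj (A ** B)) (psl_proj I2)"
    using proj_one by simp
  also have "\<dots> \<le> mn (A ** B - I2)" using A B det_mat1 by (intro pdist_proj_le) (simp_all add: det_mul)
  also have "\<dots> \<le> mn ((A - I2) ** (B - I2)) + mn (A - I2) + mn (B - I2)"
    unfolding id_prod by (meson add_mono mn_add order_trans order_refl)
  also have "\<dots> \<le> mn (A - I2) * mn (B - I2) + mn (A - I2) + mn (B - I2)"
    using mn_mult by simp
  finally show ?thesis using A B by simp
qed

lemma id_sq1: "A ** A - I2 = ((A - I2) + (A - I2)) + (A - I2) ** (A - I2)"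
  by (simp add: m2_eq_iff mult_entries mat1_entries algebra_simps)
lemma id_sq2: "A ** A + I2 = ((I2 + I2) + ((A - I2) + (A - I2))) + (A - I2) ** (A - I2)"
  by (simp add: m2_eq_iff mult_entries mat1_entries algebra_simps)

lemma mn_I2: "mn (I2 + I2) = 4" using mn_double[of I2] mn_mat1 by simp

lemma square_far:
  assumes "pdist a 1 \<le> 1/2"
  shows "3/2 * pdist a 1 \<le> pdist (a * a) 1"
proof -
  obtain A where A: "det A = 1" "psl_proj A = a" "mn (A - I2) = pdist a 1" using near_rep1 by blast
  define d where "d = pdist a 1"
  have d0: "0 \<le> d" unfolding d_def by (rule pdist_nonneg)
  have sq: "mn ((A - I2) ** (A - I2)) \<le> d * d" using mn_mult A(3) unfolding d_def by metis
  have "a * a = psl_proj (A ** A)" using proj_mult[OF A(1) A(1)] A(2) by simp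
  then have "pdist (a * a) 1 = md (A ** A) I2"
    using proj_one pdist_proj[of "A ** A" I2] det_mat1 A(1) by (simp add: det_mul)
  moreover have "mn (A ** A - I2) \<ge> 2 * d - d * d"
  proof -
    have "mn ((A - I2) + (A - I2)) - mn ((A - I2) ** (A - I2)) \<le> mn (A ** A - I2)"
      unfolding id_sq1 by (rule mn_rev_tri)
    then show ?thesis using sq mn_double[of "A - I2"] A(3) unfolding d_def by simp
  qed
  moreover have "mn (A ** A + I2) \<ge> 4 - 2 * d - d * d"
  proof -
    have "mn (I2 + I2) - mn ((A - I2) + (A - I2)) \<le> mn ((I2 + I2) + ((A - I2) + (A - I2)))"
      by (rule mn_rev_tri)
    moreover have "mn ((I2 + I2) + ((A - I2) + (A - I2))) - mn ((A - I2) ** (A - I2)) \<le> mn (A ** A + I2)"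
      unfolding id_sq2 by (rule mn_rev_tri)
    ultimately show ?thesis using sq mn_double[of "A - I2"] A(3) mn_I2 unfolding d_def by simp
  qed
  moreover have "d * d \<le> d * (1/2)" using d0 assms unfolding d_def by (intro mult_left_mono) auto
  ultimately show ?thesis using assms d0 unfolding md_def d_def by simp
qed

lemma inv_mult_near: "pdist (psl_inv a * b) 1 \<le> mn (rep a) * pdist b a"
proof -
  obtain B where B: "det B = 1" "psl_proj B = b" "mn (B - rep a) = pdist b a"
    using near_rep[of "rep a" a b] by auto
  have adA: "det (adj2 (rep a)) = 1" by (simp add: det_adj2)
  have "psl_inv a * b = psl_proj (adj2 (rep a) ** B)"
    using proj_inv[of "rep a"] proj_mult[OF adA B(1)] B(2) by simp
  then have "pdist (psl_inv a * b) 1 \<le> mn (adj2 (rep a) ** B - I2)"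
    using proj_one pdist_proj_le[of "adj2 (rep a) ** B" I2] det_mat1 adA B(1) by (simp add: det_mul)
  also have "adj2 (rep a) ** B - I2 = adj2 (rep a) ** (B - rep a)"
  proof -
    have "adj2 (rep a) ** rep a = I2" using adj2_inv(2)[of "rep a"] by simp
    moreover have "adj2 (rep a) ** (B - rep a) = adj2 (rep a) ** B - adj2 (rep a) ** rep a"
      by (simp add: m2_eq_iff mult_entries algebra_simps)
    ultimately show ?thesis by simp
  qed
  also have "mn \<dots> \<le> mn (rep a) * pdist b a" using mn_mult[of "adj2 (rep a)" "B - rep a"] B(3) by (simp add: mn_adj2)
  finally show ?thesis .
qed

lemma inv_mult_one: "psl_inv a * b = 1 \<Longrightarrow> a = b"
proof -
  assume H: "psl_inv a * b = 1"
  have adA: "det (adj2 (rep a)) = 1" by (simp add: det_adj2)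
  have "psl_inv a * b = psl_proj (adj2 (rep a) ** rep b)"
    using proj_inv[of "rep a"] proj_mult[OF adA det_rep[of b]] by simp
  then have "adj2 (rep a) ** rep b = I2 \<or> adj2 (rep a) ** rep b = - I2"
    using H proj_eq_one_iff[of "adj2 (rep a) ** rep b"] adA by (simp add: det_mul)
  moreover have "rep a ** (adj2 (rep a) ** rep b) = rep b"
    using adj2_inv(1)[of "rep a"] by (simp add: matrix_mul_assoc)
  ultimately have "rep b = rep a \<or> rep b = - rep a"
    by (metis matrix_mul_rid neg_mult_right)
  then show "a = b" using proj_neg[of "rep a"] by (metis proj_rep)
qed

lemma mn_rep_le: "mn (rep a) \<le> mn (rep c) + pdist a c"
proof -
  obtain A where A: "det A = 1" "psl_proj A = a" "mn (A - rep c) = pdist a c"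
    using near_rep[of "rep c" c a] by auto
  have "rep a = A \<or> rep a = - A" using rep_proj[OF A(1)] A(2) by simp
  then have "mn (rep a) = mn A" using mn_neg by auto
  also have "mn A = mn (rep c + (A - rep c))" by simp
  also have "\<dots> \<le> mn (rep c) + pdist a c" using mn_add A(3) by metis
  finally show ?thesis .
qed

lemma prod_cont: "pdist (a * b) (c * d) \<le> (mn (rep c) + pdist a c) * pdist b d + pdist a c * mn (rep d)"
proof -
  obtain A where A: "det A = 1" "psl_proj A = a" "mn (A - rep c) = pdist a c"
    using near_rep[of "rep c" c a] by auto
  obtain B where B: "det B = 1" "psl_proj B = b" "mn (B - rep d) = pdist b d"
    using near_rep[of "rep d" d b] by auto
  have "pdist (a * b) (c * d) = pdist (psl_proj (A ** B)) (psl_proj (rep c ** rep d))"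
    using proj_mult[OF A(1) B(1)] proj_mult[OF det_rep[of c] det_rep[of d]] A(2) B(2) by simp
  also have "\<dots> \<le> mn (A ** B - rep c ** rep d)"
    using A B by (intro pdist_proj_le) (simp_all add: det_mul)
  also have "A ** B - rep c ** rep d = A ** (B - rep d) + (A - rep c) ** rep d"
    by (simp add: m2_eq_iff mult_entries algebra_simps)
  also have "mn \<dots> \<le> mn A * mn (B - rep d) + mn (A - rep c) * mn (rep d)"
    by (meson add_mono mn_add mn_mult order_trans)
  also have "mn A \<le> mn (rep c) + pdist a c"
  proof -
    have "mn A = mn (rep c + (A - rep c))" by simp
    also have "\<dots> \<le> mn (rep c) + pdist a c" using mn_add A(3) by metis
    finally show ?thesis .
  qed
  then have "mn A * mn (B - rep d) \<le> (mn (rep c) + pdist a c) * pdist b d"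
    using B(3) mn_nonneg pdist_nonneg[of b d] by (simp add: mult_right_mono)
  finally show ?thesis using A(3) by simp
qed

lemma inv_cont: "pdist (psl_inv a) (psl_inv c) \<le> pdist a c"
proof -
  obtain A where A: "det A = 1" "psl_proj A = a" "mn (A - rep c) = pdist a c"
    using near_rep[of "rep c" c a] by auto
  have "pdist (psl_inv a) (psl_inv c) = pdist (psl_proj (adj2 A)) (psl_proj (adj2 (rep c)))"
    using proj_inv[OF A(1)] proj_inv[OF det_rep[of c]] A(2) by simp
  also have "\<dots> \<le> mn (adj2 A - adj2 (rep c))"
    using A by (intro pdist_proj_le) (simp_all add: det_adj2)
  also have "\<dots> = pdist a c" using A(3) by (simp add: adj2_diff mn_adj2)
  finally show ?thesis .
qed


lemma disc_ball:
  assumes "psl_discrete G" "1 \<in> G"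
  shows "\<exists>R>0. \<forall>g\<in>G. pdist g 1 < R \<longrightarrow> g = 1"
proof -
  obtain U where U: "open U" "U \<inter> G = {1}" using assms unfolding psl_discrete_def by blast
  then have "1 \<in> U" by blast
  then obtain e where e: "e > 0" "\<forall>h. pdist h 1 < e \<longrightarrow> h \<in> U" using U(1) unfolding open_psl2_iff by blast
  show ?thesis
  proof (intro exI conjI ballI impI)
    show "e > 0" by fact
    fix g assume "g \<in> G" "pdist g 1 < e"
    then have "g \<in> U \<inter> G" using e by blast
    then show "g = 1" using U(2) by blast
  qed
qed

lemma nss:
  assumes sub: "psl_subgroup G" and r: "0 < r" "r \<le> 1/2"
    and ann: "\<forall>g\<in>G. \<not> (r \<le> pdist g 1 \<and> pdist g 1 \<le> 3 * r)"
    and g: "g \<in> G" "pdist g 1 < r"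
  shows "g = 1"
proof (rule ccontr)
  assume "g \<noteq> 1"
  then have d0: "0 < pdist g 1" by (rule pdist_pos)
  define sq where "sq k = ((\<lambda>x. x * x) ^^ k) g" for k
  have sqS: "sq (Suc k) = sq k * sq k" for k unfolding sq_def by simp
  have main: "sq k \<in> G \<and> pdist (sq k) 1 < r \<and> (3/2)^k * pdist g 1 \<le> pdist (sq k) 1" for k
  proof (induction k)
    case 0 then show ?case using g by (simp add: sq_def)
  next
    case (Suc k)
    let ?x = "sq k"
    let ?p = "pdist ?x 1"
    have xG: "?x * ?x \<in> G" using Suc sub unfolding psl_subgroup_def by blast
    have p0: "0 \<le> ?p" by (rule pdist_nonneg)
    have "pdist (?x * ?x) 1 \<le> ?p + ?p + ?p * ?p" by (rule prod_near_one)
    also have "\<dots> < 3 * r"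
    proof -
      have "?p * ?p \<le> ?p * r" using Suc p0 by (intro mult_left_mono) auto
      also have "\<dots> \<le> ?p" using p0 r by (simp add: mult_left_le)
      finally show ?thesis using Suc by linarith
    qed
    finally have c1: "pdist (?x * ?x) 1 < r" using ann xG by force
    have c2: "3/2 * ?p \<le> pdist (?x * ?x) 1" using Suc r by (intro square_far) auto
    have c3: "(3/2)^(Suc k) * pdist g 1 \<le> 3/2 * ?p"
    proof -
      have "(3/2::real)^(Suc k) * pdist g 1 = 3/2 * ((3/2)^k * pdist g 1)" by simp
      also have "\<dots> \<le> 3/2 * ?p" using Suc by (intro mult_left_mono) auto
      finally show ?thesis .
    qed
    have c4: "(3/2)^(Suc k) * pdist g 1 \<le> pdist (?x * ?x) 1" using c2 c3 by linarith
    show ?case unfolding sqS using xG c1 c4 by blast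
  qed
  obtain n where n: "r / pdist g 1 < (3/2::real)^n" using real_arch_pow[of "3/2"] by auto
  then have "r < (3/2)^n * pdist g 1" using d0 by (simp add: divide_less_eq)
  with main[of n] show False by linarith
qed

lemma seq_from_not_near:
  assumes "\<not> (\<exists>d>0. \<forall>t\<in>{0..1}. \<bar>t - t0\<bar> < d \<longrightarrow> P t)"
  shows "\<exists>\<tau>. (\<forall>n. \<tau> n \<in> {0..1::real} \<and> \<not> P (\<tau> n)) \<and> \<tau> \<longlonglongrightarrow> t0"
proof -
  have "\<forall>n. \<exists>t. t \<in> {0..1} \<and> \<bar>t - t0\<bar> < inverse (real (Suc n)) \<and> \<not> P t"
  proof
    fix n
    have "inverse (real (Suc n)) > 0" by simp
    then show "\<exists>t. t \<in> {0..1} \<and> \<bar>t - t0\<bar> < inverse (real (Suc n)) \<and> \<not> P t"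
      using assms by blast
  qed
  then obtain \<tau> where \<tau>: "\<And>n. \<tau> n \<in> {0..1} \<and> \<bar>\<tau> n - t0\<bar> < inverse (real (Suc n)) \<and> \<not> P (\<tau> n)"
    by metis
  have "\<tau> \<longlonglongrightarrow> t0"
  proof (rule LIMSEQ_I)
    fix e :: real assume "0 < e"
    then obtain N where N: "inverse (real (Suc N)) < e" using reals_Archimedean by blast
    show "\<exists>N. \<forall>n\<ge>N. norm (\<tau> n - t0) < e"
    proof (intro exI allI impI)
      fix n assume "N \<le> n"
      then have "inverse (real (Suc n)) \<le> inverse (real (Suc N))" by (simp add: le_imp_inverse_le)
      moreover have "\<bar>\<tau> n - t0\<bar> < inverse (real (Suc n))" using \<tau>[of n] by blast
      ultimately have "\<bar>\<tau> n - t0\<bar> < e" using N by linarith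
      then show "norm (\<tau> n - t0) < e" by simp
    qed
  qed
  then show ?thesis using \<tau> by blast
qed

lemma CP_D: "chabauty_path \<Gamma> \<Longrightarrow> t \<in> {0..1} \<Longrightarrow> \<Gamma> t \<in> Dspace"
  unfolding chabauty_path_def by blast

lemma CP_sub: "chabauty_path \<Gamma> \<Longrightarrow> t \<in> {0..1} \<Longrightarrow> psl_subgroup (\<Gamma> t)"
  using CP_D unfolding Dspace_def by blast

lemma CP_conv: "chabauty_path \<Gamma> \<Longrightarrow> t \<in> {0..1} \<Longrightarrow> (\<forall>n. \<tau> n \<in> {0..1}) \<Longrightarrow> \<tau> \<longlonglongrightarrow> t
   \<Longrightarrow> chabauty_conv (\<lambda>n. \<Gamma> (\<tau> n)) (\<Gamma> t)"
  unfolding chabauty_path_def by blast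

lemma tendsto_mn: "(X \<longlonglongrightarrow> L) \<Longrightarrow> ((\<lambda>n. mn (X n)) \<longlonglongrightarrow> mn L)"
  unfolding mn_def by (intro tendsto_intros)

lemma tendsto_det2: "(X \<longlonglongrightarrow> (L::m2)) \<Longrightarrow> ((\<lambda>n. det (X n)) \<longlonglongrightarrow> det L)"
  unfolding det_2 by (intro tendsto_intros)

lemma tendsto_md: "(X \<longlonglongrightarrow> L) \<Longrightarrow> ((\<lambda>n. md (X n) I2) \<longlonglongrightarrow> md L I2)"
  unfolding md_def by (intro tendsto_intros tendsto_mn)

lemma tendsto_proj:
  assumes "X \<longlonglongrightarrow> L" "\<And>n. det (X n) = 1" "det L = 1"
  shows "(\<lambda>n. psl_proj (X n)) \<longlonglongrightarrow> psl_proj L"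
  unfolding tendsto_seq_pdist
proof (intro allI impI)
  fix e :: real assume "e > 0"
  then have "e/4 > 0" by simp
  then obtain N where N: "\<forall>n\<ge>N. dist (X n) L < e/4" using assms(1) unfolding lim_sequentially by blast
  show "\<exists>N. \<forall>n\<ge>N. pdist (psl_proj (X n)) (psl_proj L) < e"
  proof (intro exI allI impI)
    fix n assume "N \<le> n"
    have "pdist (psl_proj (X n)) (psl_proj L) \<le> mn (X n - L)" using assms by (intro pdist_proj_le)
    also have "\<dots> \<le> 4 * norm (X n - L)" by (rule mn_le_norm)
    also have "\<dots> < e"
    proof -
      have "dist (X n) L < e/4" using N \<open>N \<le> n\<close> by blast
      then have "norm (X n - L) < e/4" by (simp add: dist_norm)
      then show ?thesis by linarith
    qed
    finally show "pdist (psl_proj (X n)) (psl_proj L) < e" .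
  qed
qed

lemma uniform_disc:
  assumes CP: "chabauty_path \<Gamma>" and t0: "t0 \<in> {0..1}"
  shows "\<exists>r>0. \<exists>d>0. \<forall>t\<in>{0..1}. \<bar>t - t0\<bar> < d \<longrightarrow> (\<forall>g\<in>\<Gamma> t. pdist g 1 < r \<longrightarrow> g = 1)"
proof -
  have D0: "\<Gamma> t0 \<in> Dspace" using CP_D[OF CP t0] .
  then have "1 \<in> \<Gamma> t0" "psl_discrete (\<Gamma> t0)" unfolding Dspace_def psl_subgroup_def by auto
  then obtain R where R: "R > 0" "\<forall>g\<in>\<Gamma> t0. pdist g 1 < R \<longrightarrow> g = 1" using disc_ball by blast
  define r where "r = min (1/3) (R/4)"
  have r: "0 < r" "r \<le> 1/2" "3 * r < R" using R unfolding r_def by auto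
  have ann: "\<exists>d>0. \<forall>t\<in>{0..1}. \<bar>t - t0\<bar> < d \<longrightarrow> (\<forall>g\<in>\<Gamma> t. \<not> (r \<le> pdist g 1 \<and> pdist g 1 \<le> 3 * r))"
  proof (rule ccontr)
    assume "\<not> ?thesis"
    from seq_from_not_near[OF this] obtain \<tau> where
      \<tau>: "\<forall>n. \<tau> n \<in> {0..1} \<and> \<not> (\<forall>g\<in>\<Gamma> (\<tau> n). \<not> (r \<le> pdist g 1 \<and> pdist g 1 \<le> 3 * r))" "\<tau> \<longlonglongrightarrow> t0"
      by blast
    then have "\<forall>n. \<exists>g. g \<in> \<Gamma> (\<tau> n) \<and> r \<le> pdist g 1 \<and> pdist g 1 \<le> 3 * r" by blast
    then obtain \<psi> where \<psi>: "\<And>n. \<psi> n \<in> \<Gamma> (\<tau> n) \<and> r \<le> pdist (\<psi> n) 1 \<and> pdist (\<psi> n) 1 \<le> 3 * r" by metis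
    have "\<forall>n. \<exists>A. det A = 1 \<and> psl_proj A = \<psi> n \<and> mn (A - I2) = pdist (\<psi> n) 1" using near_rep1 by blast
    then obtain A where A: "\<And>n. det (A n) = 1 \<and> psl_proj (A n) = \<psi> n \<and> mn (A n - I2) = pdist (\<psi> n) 1"
      by metis
    have bnd: "A n \<in> cball 0 (3 * r + 2)" for n
    proof -
      have "mn (A n) = mn ((A n - I2) + I2)" by simp
      also have "\<dots> \<le> mn (A n - I2) + 2" using mn_add[of "A n - I2" I2] mn_mat1 by simp
      finally have "mn (A n) \<le> 3 * r + 2" using A[of n] \<psi>[of n] by simp
      then show ?thesis using norm_le_mn[of "A n"] by simp
    qed
    have "seq_compact (cball (0::m2) (3 * r + 2))" by (intro compact_imp_seq_compact compact_cball)
    then obtain L \<sigma> where L: "strict_mono \<sigma>" "(A \<circ> \<sigma>) \<longlonglongrightarrow> L"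
      unfolding seq_compact_def using bnd by meson
    have L': "(\<lambda>n. A (\<sigma> n)) \<longlonglongrightarrow> L" using L(2) by (simp add: comp_def)
    have "(\<lambda>n. det (A (\<sigma> n))) \<longlonglongrightarrow> det L" by (rule tendsto_det2[OF L'])
    moreover have "(\<lambda>n. det (A (\<sigma> n))) = (\<lambda>n. 1)" using A by simp
    ultimately have detL: "det L = 1" using LIMSEQ_unique tendsto_const by metis
    have mdL: "(\<lambda>n. md (A (\<sigma> n)) I2) \<longlonglongrightarrow> md L I2" by (rule tendsto_md[OF L'])
    have mdA: "md (A n) I2 = pdist (\<psi> n) 1" for n
      using pdist_proj[of "A n" I2] A[of n] det_mat1 proj_one by simp
    have lo: "r \<le> md L I2"
      by (rule LIMSEQ_le_const[OF mdL]) (use \<psi> mdA in auto)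
    have hi: "md L I2 \<le> 3 * r"
      by (rule LIMSEQ_le_const2[OF mdL]) (use \<psi> mdA in auto)
    have conv: "(\<psi> \<circ> \<sigma>) \<longlonglongrightarrow> psl_proj L"
    proof -
      have "(\<lambda>n. psl_proj (A (\<sigma> n))) \<longlonglongrightarrow> psl_proj L" using tendsto_proj[OF L'] A detL by blast
      moreover have "(\<lambda>n. psl_proj (A (\<sigma> n))) = \<psi> \<circ> \<sigma>" using A by (simp add: comp_def)
      ultimately show ?thesis by simp
    qed
    have "chabauty_conv (\<lambda>n. \<Gamma> (\<tau> n)) (\<Gamma> t0)" using CP_conv[OF CP t0] \<tau> by blast
    then have "psl_proj L \<in> \<Gamma> t0" unfolding chabauty_conv_def using \<psi> L(1) conv by blast
    moreover have "pdist (psl_proj L) 1 = md L I2" using pdist_proj[of L I2] detL det_mat1 proj_one by simp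
    ultimately have "psl_proj L = 1" using R hi r by force
    then have "md L I2 = 0" using \<open>pdist (psl_proj L) 1 = md L I2\<close> by simp
    then show False using lo r by simp
  qed
  then obtain d where d: "d > 0" "\<forall>t\<in>{0..1}. \<bar>t - t0\<bar> < d \<longrightarrow> (\<forall>g\<in>\<Gamma> t. \<not> (r \<le> pdist g 1 \<and> pdist g 1 \<le> 3 * r))"
    by blast
  show ?thesis
  proof (intro exI conjI ballI impI)
    show "r > 0" "d > 0" using r d by auto
    fix t g assume "t \<in> {0..1}" "\<bar>t - t0\<bar> < d" "g \<in> \<Gamma> t" "pdist g 1 < r"
    then show "g = 1" using nss[of "\<Gamma> t" r g] CP_sub[OF CP] d r by blast
  qed
qed

lemma near_exists:
  assumes CP: "chabauty_path \<Gamma>" and t0: "t0 \<in> {0..1}" and g: "g \<in> \<Gamma> t0" and e: "e > 0"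
  shows "\<exists>d>0. \<forall>t\<in>{0..1}. \<bar>t - t0\<bar> < d \<longrightarrow> (\<exists>h\<in>\<Gamma> t. pdist h g < e)"
proof (rule ccontr)
  assume "\<not> ?thesis"
  from seq_from_not_near[OF this] obtain \<tau> where
    \<tau>: "\<forall>n. \<tau> n \<in> {0..1} \<and> \<not> (\<exists>h\<in>\<Gamma> (\<tau> n). pdist h g < e)" "\<tau> \<longlonglongrightarrow> t0" by blast
  have "chabauty_conv (\<lambda>n. \<Gamma> (\<tau> n)) (\<Gamma> t0)" using CP_conv[OF CP t0] \<tau> by blast
  then obtain \<psi> where \<psi>: "\<forall>n. \<psi> n \<in> \<Gamma> (\<tau> n)" "\<psi> \<longlonglongrightarrow> g" using g unfolding chabauty_conv_def by blast
  then obtain N where "\<forall>n\<ge>N. pdist (\<psi> n) g < e" using e unfolding tendsto_seq_pdist by blast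
  then show False using \<tau> \<psi> by blast
qed


lemma pdist_mono_bound:
  fixes x :: real
  assumes "0 \<le> m" "m \<le> K" "0 \<le> x" "x < y" "0 < K" "K * y \<le> r"
  shows "m * x < r"
proof -
  have "m * x \<le> K * x" using assms by (intro mult_right_mono) auto
  also have "\<dots> < K * y" using assms by simp
  finally show ?thesis using assms by linarith
qed

lemma path_unique:
  assumes CP: "chabauty_path \<Gamma>"
    and p1: "gpath \<Gamma> s \<psi> Ia j1" and p2: "gpath \<Gamma> s \<psi> Ib j2" and t: "t \<in> Ia \<inter> Ib"
  shows "j1 t = j2 t"
proof -
  define I where "I = Ia \<inter> Ib"
  have II: "is_interval I" using p1 p2 unfolding gpath_def I_def by (intro is_interval_Int) auto
  have Isub: "I \<subseteq> {0..1}" "I \<subseteq> Ia" "I \<subseteq> Ib" using p1 unfolding gpath_def I_def by auto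
  have sI: "s \<in> I" using p1 p2 unfolding gpath_def I_def by auto
  have c1: "continuous_on I j1" using p1 Isub unfolding gpath_def by (meson continuous_on_subset)
  have c2: "continuous_on I j2" using p2 Isub unfolding gpath_def by (meson continuous_on_subset)
  have m1: "\<forall>t\<in>I. j1 t \<in> \<Gamma> t" using p1 Isub unfolding gpath_def by blast
  have m2: "\<forall>t\<in>I. j2 t \<in> \<Gamma> t" using p2 Isub unfolding gpath_def by blast
  define S where "S = {t \<in> I. j1 t = j2 t}"
  have op: "openin (top_of_set I) S"
    unfolding openin_euclidean_subtopology_iff
  proof (intro conjI ballI)
    show "S \<subseteq> I" unfolding S_def by blast
    fix x assume xS: "x \<in> S"
    then have xI: "x \<in> I" and eq: "j1 x = j2 x" unfolding S_def by auto
    have x01: "x \<in> {0..1}" using xI Isub by blast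
    obtain r d where rd: "r > 0" "d > 0" "\<forall>t\<in>{0..1}. \<bar>t - x\<bar> < d \<longrightarrow> (\<forall>g\<in>\<Gamma> t. pdist g 1 < r \<longrightarrow> g = 1)"
      using uniform_disc[OF CP x01] by blast
    define M where "M = mn (rep (j1 x)) + 1"
    have M0: "M > 0" unfolding M_def using mn_nonneg[of "rep (j1 x)"] by linarith
    define \<eta> where "\<eta> = min 1 (r / (2 * M))"
    have \<eta>0: "\<eta> > 0" unfolding \<eta>_def using rd M0 by simp
    obtain d1 where d1: "d1 > 0" "\<forall>y\<in>I. dist y x < d1 \<longrightarrow> pdist (j1 y) (j1 x) < \<eta>"
      using c1 xI \<eta>0 unfolding continuous_on_pdist_iff by blast
    obtain d2 where d2: "d2 > 0" "\<forall>y\<in>I. dist y x < d2 \<longrightarrow> pdist (j2 y) (j2 x) < \<eta>"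
      using c2 xI \<eta>0 unfolding continuous_on_pdist_iff by blast
    show "\<exists>e>0. \<forall>x'\<in>I. dist x' x < e \<longrightarrow> x' \<in> S"
    proof (intro exI[of _ "min d (min d1 d2)"] conjI ballI impI)
      show "min d (min d1 d2) > 0" using rd d1 d2 by simp
      fix y assume yI: "y \<in> I" and dy: "dist y x < min d (min d1 d2)"
      have a1: "pdist (j1 y) (j1 x) < \<eta>" using d1 yI dy by simp
      have a2: "pdist (j2 y) (j2 x) < \<eta>" using d2 yI dy by simp
      have b: "pdist (j2 y) (j1 y) < 2 * \<eta>"
        using pdist_tri[of "j2 y" "j1 y" "j2 x"] pdist_sym[of "j1 y" "j1 x"] a1 a2 eq by simp
      have mm: "mn (rep (j1 y)) \<le> M"
        using mn_rep_le[of "j1 y" "j1 x"] a1 \<eta>_def unfolding M_def by simp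
      have "pdist (psl_inv (j1 y) * j2 y) 1 \<le> mn (rep (j1 y)) * pdist (j2 y) (j1 y)" by (rule inv_mult_near)
      also have "\<dots> < r"
      proof (rule pdist_mono_bound[OF mn_nonneg mm pdist_nonneg b M0])
        have "M * (2 * \<eta>) \<le> M * (2 * (r / (2 * M)))" using M0 unfolding \<eta>_def by (intro mult_left_mono) auto
        also have "\<dots> = r" using M0 by simp
        finally show "M * (2 * \<eta>) \<le> r" .
      qed
      finally have small: "pdist (psl_inv (j1 y) * j2 y) 1 < r" .
      have y01: "y \<in> {0..1}" using yI Isub by blast
      have inG: "psl_inv (j1 y) * j2 y \<in> \<Gamma> y"
        using CP_sub[OF CP y01] m1 m2 yI unfolding psl_subgroup_def by blast
      have "\<bar>y - x\<bar> < d" using dy by (simp add: dist_real_def)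
      then have "psl_inv (j1 y) * j2 y = 1" using rd(3) y01 inG small by blast
      then have "j1 y = j2 y" by (rule inv_mult_one)
      then show "y \<in> S" using yI unfolding S_def by blast
    qed
  qed
  have cl: "closedin (top_of_set I) S"
    unfolding closedin_def
  proof (intro conjI)
    show "S \<subseteq> topspace (top_of_set I)" unfolding S_def by auto
    show "openin (top_of_set I) (topspace (top_of_set I) - S)"
      unfolding openin_euclidean_subtopology_iff
    proof (intro conjI ballI)
      show "topspace (top_of_set I) - S \<subseteq> I" by auto
      fix x assume "x \<in> topspace (top_of_set I) - S"
      then have xI: "x \<in> I" and ne: "j1 x \<noteq> j2 x" unfolding S_def by auto
      define \<delta> where "\<delta> = pdist (j1 x) (j2 x)"
      have \<delta>0: "\<delta> > 0" unfolding \<delta>_def using ne by (rule pdist_pos)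
      obtain d1 where d1: "d1 > 0" "\<forall>y\<in>I. dist y x < d1 \<longrightarrow> pdist (j1 y) (j1 x) < \<delta>/2"
        using c1 xI \<delta>0 unfolding continuous_on_pdist_iff by (meson half_gt_zero)
      obtain d2 where d2: "d2 > 0" "\<forall>y\<in>I. dist y x < d2 \<longrightarrow> pdist (j2 y) (j2 x) < \<delta>/2"
        using c2 xI \<delta>0 unfolding continuous_on_pdist_iff by (meson half_gt_zero)
      show "\<exists>e>0. \<forall>x'\<in>I. dist x' x < e \<longrightarrow> x' \<in> topspace (top_of_set I) - S"
      proof (intro exI[of _ "min d1 d2"] conjI ballI impI)
        show "min d1 d2 > 0" using d1 d2 by simp
        fix y assume yI: "y \<in> I" and dy: "dist y x < min d1 d2"
        have a1: "pdist (j1 y) (j1 x) < \<delta>/2" using d1 yI dy by simp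
        have a2: "pdist (j2 y) (j2 x) < \<delta>/2" using d2 yI dy by simp
        have "\<delta> \<le> pdist (j1 x) (j1 y) + pdist (j1 y) (j2 y) + pdist (j2 y) (j2 x)"
          using pdist_tri[of "j1 x" "j2 x" "j1 y"] pdist_tri[of "j1 y" "j2 x" "j2 y"] unfolding \<delta>_def by linarith
        then have "j1 y \<noteq> j2 y" using a1 a2 pdist_sym[of "j1 x" "j1 y"] by force
        then show "y \<in> topspace (top_of_set I) - S" using yI unfolding S_def by auto
      qed
    qed
  qed
  have "connected I" using II by (rule is_interval_connected)
  then have "S = {} \<or> S = I" using op cl unfolding connected_clopen by blast
  moreover have "s \<in> S" using sI p1 p2 unfolding S_def gpath_def by auto
  ultimately have "S = I" by blast
  then show ?thesis using t unfolding S_def I_def by blast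
qed

lemma Jmap_eval:
  assumes CP: "chabauty_path \<Gamma>" and p: "gpath \<Gamma> s \<psi> I j" and t: "t \<in> I"
  shows "Jmap \<Gamma> s t \<psi> = Some (j t)"
proof -
  have ex: "\<exists>I j. gpath \<Gamma> s \<psi> I j \<and> t \<in> I" using p t by blast
  have "(THE g. \<exists>I j. gpath \<Gamma> s \<psi> I j \<and> t \<in> I \<and> j t = g) = j t"
  proof (rule the_equality)
    show "\<exists>I' j'. gpath \<Gamma> s \<psi> I' j' \<and> t \<in> I' \<and> j' t = j t" using p t by blast
  next
    fix g assume "\<exists>I' j'. gpath \<Gamma> s \<psi> I' j' \<and> t \<in> I' \<and> j' t = g"
    then obtain I' j' where "gpath \<Gamma> s \<psi> I' j'" "t \<in> I'" "j' t = g" by blast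
    then show "g = j t" using path_unique[OF CP _ p, of I' j' t] t by blast
  qed
  then show ?thesis unfolding Jmap_def using ex by simp
qed


definition Iv :: "real \<Rightarrow> real \<Rightarrow> real set" where
  "Iv s d = {t \<in> {0..1}. \<bar>t - s\<bar> < d}"

lemma Iv_interval: "is_interval (Iv s d)"
  unfolding is_interval_1 Iv_def by (auto simp: abs_less_iff)

lemma Iv_sub: "Iv s d \<subseteq> {0..1}" unfolding Iv_def by auto

lemma Iv_mem: "s \<in> {0..1} \<Longrightarrow> d > 0 \<Longrightarrow> s \<in> Iv s d" unfolding Iv_def by auto

lemma Iv_mono: "d' \<le> d \<Longrightarrow> Iv s d' \<subseteq> Iv s d" unfolding Iv_def by auto

lemma gpath_mono:
  assumes "gpath \<Gamma> s \<psi> (Iv s d) j" "0 < d'" "d' \<le> d"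
  shows "gpath \<Gamma> s \<psi> (Iv s d') j"
  using assms Iv_mono[OF assms(3), of s] Iv_interval[of s d'] Iv_sub[of s d']
  unfolding gpath_def by (auto simp: Iv_def intro: continuous_on_subset)

lemma path_exists:
  assumes CP: "chabauty_path \<Gamma>" and s: "s \<in> {0..1}" and \<psi>: "\<psi> \<in> \<Gamma> s"
  shows "\<exists>d>0. \<exists>j. gpath \<Gamma> s \<psi> (Iv s d) j"
proof -
  obtain r d0 where rd: "r > 0" "d0 > 0" "\<forall>t\<in>{0..1}. \<bar>t - s\<bar> < d0 \<longrightarrow> (\<forall>g\<in>\<Gamma> t. pdist g 1 < r \<longrightarrow> g = 1)"
    using uniform_disc[OF CP s] by blast
  define M where "M = mn (rep \<psi>) + 1"
  have M0: "M > 0" unfolding M_def using mn_nonneg[of "rep \<psi>"] by linarith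
  define \<rho> where "\<rho> = min 1 (r / (4 * M))"
  have \<rho>0: "\<rho> > 0" unfolding \<rho>_def using rd M0 by simp
  obtain d1 where d1: "d1 > 0" "\<forall>t\<in>{0..1}. \<bar>t - s\<bar> < d1 \<longrightarrow> (\<exists>h\<in>\<Gamma> t. pdist h \<psi> < \<rho>)"
    using near_exists[OF CP s \<psi> \<rho>0] by blast
  define d where "d = min d0 d1"
  have d0': "d > 0" unfolding d_def using rd d1 by simp
  have uniq: "h1 = h2" if t: "t \<in> Iv s d" and h: "h1 \<in> \<Gamma> t" "h2 \<in> \<Gamma> t" "pdist h1 \<psi> < \<rho>" "pdist h2 \<psi> < \<rho>"
    for t h1 h2
  proof -
    have t01: "t \<in> {0..1}" and td: "\<bar>t - s\<bar> < d0" using t unfolding Iv_def d_def by auto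
    have b: "pdist h2 h1 < 2 * \<rho>" using pdist_tri[of h2 h1 \<psi>] pdist_sym[of h1 \<psi>] h by simp
    have mm: "mn (rep h1) \<le> M" using mn_rep_le[of h1 \<psi>] h \<rho>_def unfolding M_def by simp
    have "pdist (psl_inv h1 * h2) 1 \<le> mn (rep h1) * pdist h2 h1" by (rule inv_mult_near)
    also have "\<dots> < r"
    proof (rule pdist_mono_bound[OF mn_nonneg mm pdist_nonneg b M0])
      have "M * (2 * \<rho>) \<le> M * (2 * (r / (4 * M)))" using M0 unfolding \<rho>_def by (intro mult_left_mono) auto
      also have "\<dots> = r / 2" using M0 by simp
      finally show "M * (2 * \<rho>) \<le> r" using rd by linarith
    qed
    finally have "pdist (psl_inv h1 * h2) 1 < r" .
    moreover have "psl_inv h1 * h2 \<in> \<Gamma> t" using CP_sub[OF CP t01] h unfolding psl_subgroup_def by blast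
    ultimately have "psl_inv h1 * h2 = 1" using rd(3) t01 td by blast
    then show "h1 = h2" by (rule inv_mult_one)
  qed
  define j where "j t = (SOME h. h \<in> \<Gamma> t \<and> pdist h \<psi> < \<rho>)" for t
  have jP: "j t \<in> \<Gamma> t \<and> pdist (j t) \<psi> < \<rho>" if "t \<in> Iv s d" for t
  proof -
    have "\<exists>h. h \<in> \<Gamma> t \<and> pdist h \<psi> < \<rho>" using d1 that unfolding Iv_def d_def by auto
    then show ?thesis unfolding j_def by (rule someI_ex)
  qed
  have sIv: "s \<in> Iv s d" using s d0' by (rule Iv_mem)
  have js: "j s = \<psi>" using uniq[OF sIv _ \<psi>] jP[OF sIv] \<rho>0 by simp
  have cont: "continuous_on (Iv s d) j"
    unfolding continuous_on_pdist_iff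
  proof (intro ballI allI impI)
    fix x and e :: real assume xI: "x \<in> Iv s d" and e: "e > 0"
    have x01: "x \<in> {0..1}" using xI Iv_sub by blast
    define c where "c = \<rho> - pdist (j x) \<psi>"
    have c0: "c > 0" unfolding c_def using jP[OF xI] by simp
    obtain d2 where d2: "d2 > 0" "\<forall>t\<in>{0..1}. \<bar>t - x\<bar> < d2 \<longrightarrow> (\<exists>h\<in>\<Gamma> t. pdist h (j x) < min e c)"
      using near_exists[OF CP x01, of "j x" "min e c"] jP[OF xI] e c0 by auto
    show "\<exists>\<delta>>0. \<forall>y\<in>Iv s d. dist y x < \<delta> \<longrightarrow> pdist (j y) (j x) < e"
    proof (intro exI[of _ d2] conjI ballI impI)
      show "d2 > 0" by fact
      fix y assume yI: "y \<in> Iv s d" and dy: "dist y x < d2"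
      have y01: "y \<in> {0..1}" using yI Iv_sub by blast
      have "\<bar>y - x\<bar> < d2" using dy by (simp add: dist_real_def)
      then obtain h where h: "h \<in> \<Gamma> y" "pdist h (j x) < min e c" using d2 y01 by blast
      have "pdist h \<psi> \<le> pdist h (j x) + pdist (j x) \<psi>" by (rule pdist_tri)
      then have "pdist h \<psi> < \<rho>" using h(2) unfolding c_def by simp
      then have "h = j y" using uniq[OF yI h(1)] jP[OF yI] by blast
      then show "pdist (j y) (j x) < e" using h(2) by simp
    qed
  qed
  have "gpath \<Gamma> s \<psi> (Iv s d) j"
    unfolding gpath_def using Iv_sub Iv_interval sIv cont jP js by blast
  then show ?thesis using d0' by blast
qed

lemma gpath_one:
  assumes CP: "chabauty_path \<Gamma>" and "I \<subseteq> {0..1}" "is_interval I" "s \<in> I"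
  shows "gpath \<Gamma> s 1 I (\<lambda>t. 1)"
  unfolding gpath_def using assms CP_sub[OF CP] unfolding psl_subgroup_def by auto

lemma gpath_mult:
  assumes CP: "chabauty_path \<Gamma>" and p1: "gpath \<Gamma> s a I j1" and p2: "gpath \<Gamma> s b I j2"
  shows "gpath \<Gamma> s (a * b) I (\<lambda>t. j1 t * j2 t)"
proof -
  have c1: "continuous_on I j1" and c2: "continuous_on I j2" using p1 p2 unfolding gpath_def by auto
  have cont: "continuous_on I (\<lambda>t. j1 t * j2 t)"
    unfolding continuous_on_pdist_iff
  proof (intro ballI allI impI)
    fix x and e :: real assume xI: "x \<in> I" and e: "e > 0"
    define M where "M = mn (rep (j1 x)) + mn (rep (j2 x)) + 2"
    have M0: "M > 0" unfolding M_def using mn_nonneg[of "rep (j1 x)"] mn_nonneg[of "rep (j2 x)"] by linarith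
    define \<eta> where "\<eta> = min 1 (e / (2 * M))"
    have \<eta>0: "\<eta> > 0" unfolding \<eta>_def using e M0 by simp
    obtain d1 where d1: "d1 > 0" "\<forall>y\<in>I. dist y x < d1 \<longrightarrow> pdist (j1 y) (j1 x) < \<eta>"
      using c1 xI \<eta>0 unfolding continuous_on_pdist_iff by blast
    obtain d2 where d2: "d2 > 0" "\<forall>y\<in>I. dist y x < d2 \<longrightarrow> pdist (j2 y) (j2 x) < \<eta>"
      using c2 xI \<eta>0 unfolding continuous_on_pdist_iff by blast
    show "\<exists>\<delta>>0. \<forall>y\<in>I. dist y x < \<delta> \<longrightarrow> pdist (j1 y * j2 y) (j1 x * j2 x) < e"
    proof (intro exI[of _ "min d1 d2"] conjI ballI impI)
      show "min d1 d2 > 0" using d1 d2 by simp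
      fix y assume yI: "y \<in> I" and dy: "dist y x < min d1 d2"
      define p where "p = pdist (j1 y) (j1 x)"
      define q where "q = pdist (j2 y) (j2 x)"
      have p: "0 \<le> p" "p < \<eta>" using d1 yI dy pdist_nonneg unfolding p_def by auto
      have q: "0 \<le> q" "q < \<eta>" using d2 yI dy pdist_nonneg unfolding q_def by auto
      have "pdist (j1 y * j2 y) (j1 x * j2 x) \<le> (mn (rep (j1 x)) + p) * q + p * mn (rep (j2 x))"
        unfolding p_def q_def by (rule prod_cont)
      also have "\<dots> \<le> M * q + p * M"
      proof -
        have "(mn (rep (j1 x)) + p) * q \<le> M * q"
          using p q \<eta>_def mn_nonneg[of "rep (j2 x)"] unfolding M_def by (intro mult_right_mono) auto
        moreover have "p * mn (rep (j2 x)) \<le> p * M"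
          using p mn_nonneg[of "rep (j1 x)"] unfolding M_def by (intro mult_left_mono) auto
        ultimately show ?thesis by linarith
      qed
      also have "\<dots> < M * \<eta> + \<eta> * M" using p q M0 by (intro add_strict_mono) auto
      also have "\<dots> \<le> e"
      proof -
        have "M * \<eta> \<le> M * (e / (2 * M))" using M0 unfolding \<eta>_def by (intro mult_left_mono) auto
        also have "\<dots> = e / 2" using M0 by simp
        finally show ?thesis by (simp add: mult.commute)
      qed
      finally show "pdist (j1 y * j2 y) (j1 x * j2 x) < e" .
    qed
  qed
  show ?thesis
    using p1 p2 cont CP_sub[OF CP] unfolding gpath_def psl_subgroup_def by (auto simp: subset_iff)
qed

lemma gpath_inv:
  assumes CP: "chabauty_path \<Gamma>" and p: "gpath \<Gamma> s a I j"
  shows "gpath \<Gamma> s (psl_inv a) I (\<lambda>t. psl_inv (j t))"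
proof -
  have c: "continuous_on I j" using p unfolding gpath_def by auto
  have cont: "continuous_on I (\<lambda>t. psl_inv (j t))"
    unfolding continuous_on_pdist_iff
  proof (intro ballI allI impI)
    fix x and e :: real assume xI: "x \<in> I" and e: "e > 0"
    obtain d where d: "d > 0" "\<forall>y\<in>I. dist y x < d \<longrightarrow> pdist (j y) (j x) < e"
      using c xI e unfolding continuous_on_pdist_iff by blast
    show "\<exists>\<delta>>0. \<forall>y\<in>I. dist y x < \<delta> \<longrightarrow> pdist (psl_inv (j y)) (psl_inv (j x)) < e"
      using d inv_cont le_less_trans by blast
  qed
  show ?thesis
    using p cont CP_sub[OF CP] unfolding gpath_def psl_subgroup_def by (auto simp: subset_iff)
qed


lemma finite_paths:
  assumes CP: "chabauty_path \<Gamma>" and s: "s \<in> {0..1}"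
  shows "finite F \<Longrightarrow> F \<subseteq> \<Gamma> s \<Longrightarrow> \<exists>d>0. \<forall>f\<in>F. \<exists>j. gpath \<Gamma> s f (Iv s d) j"
proof (induction F rule: finite_induct)
  case empty
  then show ?case by (intro exI[of _ 1]) auto
next
  case (insert x F)
  then obtain d where d: "d > 0" "\<forall>f\<in>F. \<exists>j. gpath \<Gamma> s f (Iv s d) j" by auto
  obtain dx jx where dx: "dx > 0" "gpath \<Gamma> s x (Iv s dx) jx"
    using path_exists[OF CP s, of x] insert by auto
  show ?case
  proof (intro exI[of _ "min d dx"] conjI ballI)
    show "min d dx > 0" using d dx by simp
    fix f assume "f \<in> insert x F"
    then show "\<exists>j. gpath \<Gamma> s f (Iv s (min d dx)) j"
    proof
      assume "f = x"
      then show ?thesis using gpath_mono[OF dx(2), of "min d dx"] d dx by auto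
    next
      assume "f \<in> F"
      then obtain j where "gpath \<Gamma> s f (Iv s d) j" using d by blast
      then show ?thesis using gpath_mono[of \<Gamma> s f d j "min d dx"] d dx by auto
    qed
  qed
qed

theorem mainTheorem12:
  fixes \<Gamma> :: "real \<Rightarrow> psl2 set" and s :: real and H :: "psl2 set"
  assumes "chabauty_path \<Gamma>"
    and "s \<in> {0..1}"
    and "H \<subseteq> \<Gamma> s" and "psl_subgroup H" and "psl_fin_gen H"
  shows "\<exists>\<epsilon>>0. \<forall>t\<in>{0..1}. \<bar>t - s\<bar> < \<epsilon> \<longrightarrow>
           (\<forall>h\<in>H. Jmap \<Gamma> s t h \<noteq> None) \<and>
           inj_on (Jmap \<Gamma> s t) H \<and>
           (\<forall>a\<in>H. \<forall>b\<in>H. Jmap \<Gamma> s t (a * b) = Some (the (Jmap \<Gamma> s t a) * the (Jmap \<Gamma> s t b)))"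
proof -
  note CP = assms(1) and s = assms(2)
  obtain F where F: "finite F" "F \<subseteq> H" "H = psl_generated F"
    using assms(5) unfolding psl_fin_gen_def by blast
  obtain d where d: "d > 0" "\<forall>f\<in>F. \<exists>j. gpath \<Gamma> s f (Iv s d) j"
    using finite_paths[OF CP s F(1)] F(2) assms(3) by blast
  define K where "K = {h. \<exists>j. gpath \<Gamma> s h (Iv s d) j}"
  have sI: "s \<in> Iv s d" using s d by (intro Iv_mem)
  have k1: "1 \<in> K" unfolding K_def using gpath_one[OF CP Iv_sub Iv_interval sI] by blast
  have k2: "a * b \<in> K" if "a \<in> K" "b \<in> K" for a b
    using that unfolding K_def using gpath_mult[OF CP] by blast
  have k3: "psl_inv a \<in> K" if "a \<in> K" for a
    using that unfolding K_def using gpath_inv[OF CP] by blast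
  have subK: "psl_subgroup K" unfolding psl_subgroup_def using k1 k2 k3 by blast
  have "F \<subseteq> K" unfolding K_def using d by blast
  then have HK: "H \<subseteq> K" unfolding F(3) psl_generated_def using subK by blast
  have pathH: "\<exists>j. gpath \<Gamma> s h (Iv s d) j" if "h \<in> H" for h using HK that unfolding K_def by blast
  have main: "(\<forall>h\<in>H. Jmap \<Gamma> s t h \<noteq> None) \<and>
           inj_on (Jmap \<Gamma> s t) H \<and>
           (\<forall>a\<in>H. \<forall>b\<in>H. Jmap \<Gamma> s t (a * b) = Some (the (Jmap \<Gamma> s t a) * the (Jmap \<Gamma> s t b)))"
    if t01: "t \<in> {0..1}" and td: "\<bar>t - s\<bar> < d" for t
  proof -
    have tI: "t \<in> Iv s d" using t01 td unfolding Iv_def by simp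
    have A: "\<forall>h\<in>H. Jmap \<Gamma> s t h \<noteq> None"
      using pathH Jmap_eval[OF CP _ tI] by fastforce
    have B: "inj_on (Jmap \<Gamma> s t) H"
    proof (rule inj_onI)
      fix a b assume a: "a \<in> H" and b: "b \<in> H" and eq: "Jmap \<Gamma> s t a = Jmap \<Gamma> s t b"
      obtain ja where ja: "gpath \<Gamma> s a (Iv s d) ja" using pathH a by blast
      obtain jb where jb: "gpath \<Gamma> s b (Iv s d) jb" using pathH b by blast
      have "ja t = jb t" using eq Jmap_eval[OF CP ja tI] Jmap_eval[OF CP jb tI] by simp
      then have ga: "gpath \<Gamma> t (ja t) (Iv s d) ja" and gb: "gpath \<Gamma> t (ja t) (Iv s d) jb"
        using ja jb tI unfolding gpath_def by auto
      have "ja s = jb s" using path_unique[OF CP ga gb] sI by blast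
      then show "a = b" using ja jb unfolding gpath_def by simp
    qed
    have C: "Jmap \<Gamma> s t (a * b) = Some (the (Jmap \<Gamma> s t a) * the (Jmap \<Gamma> s t b))"
      if a: "a \<in> H" and b: "b \<in> H" for a b
    proof -
      obtain ja where ja: "gpath \<Gamma> s a (Iv s d) ja" using pathH a by blast
      obtain jb where jb: "gpath \<Gamma> s b (Iv s d) jb" using pathH b by blast
      have "Jmap \<Gamma> s t (a * b) = Some (ja t * jb t)"
        using Jmap_eval[OF CP gpath_mult[OF CP ja jb] tI] .
      then show ?thesis using Jmap_eval[OF CP ja tI] Jmap_eval[OF CP jb tI] by simp
    qed
    show ?thesis using A B C by blast
  qed
  show ?thesis using d(1) main by blast
qed

end
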